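(* Let $I\in\mathcal I$ and let $(c_m)_m$ be a sequence in $N$. Then there exist a subsequence $(c_k)_k$ and elements $\gamma_k\in\Gamma_I$, $b_k\in N$ such that $c_k=\gamma_k b_k$ for every $k$ and the sequence $(b_k)$ converges to an element $b\in N$ (in the topology of $N\subset T^d$).
   Context: Let $\mathfrak d$ be an $n$-dimensional real vector space. A quasilattice in $\mathfrak d$ is the $\mathbb Z$-submodule generated by a finite set of vectors spanning $\mathfrak d$. Let $\Delta\subset\mathfrak d^*$ be an $n$-dimensional convex polytope with $d$ facets, $\Delta=\bigcap_{j=1}^d\{\mu:\langle\mu,X_j\rangle\ge\lambda_j\}$, with chosen inward normals $X_1,\dots,X_d\in\mathfrak d$, and let $Q$ be a quasilattice containing the $X_j$. For each face $F$ let $I_F=\{j:\langle\mu,X_j\rangle=\lambda_j \text{ on } F\}$. Let $\pi:\mathbb R^d\to\mathfrak d$, $e_j\mapsto X_j$; $T^d=\mathbb R^d/\mathbb Z^d$ with projection $\exp$; $N=\ker(T^d\to\mathfrak d/Q)$ (induced by $\pi$). For $J\subseteq\{1,\dots,d\}$, $T^J=\exp(\mathbb R^J)$ where $\mathbb R^J$ is spanned by $e_j$, $j\in J$. $\mathcal I$ is the set of subsets $I$ such that $\{X_j:j\in I\}$ is a basis of $\mathfrak d$ and $I\subseteq I_\mu$ for some vertex $\mu$ of $\Delta$; $\Gamma_I=N\cap T^I$. *)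

theory Defs
  imports "HOL-Analysis.Analysis"
begin

text \<open>The vector space d is a Euclidean space 'a with DIM('a) = n; its dual is identified
  with 'a via the inner product, so the pairing of mu with X is mu \<bullet> X.
  Facets are indexed by a finite type 'd (so d = CARD('d)); R^d = real^'d.
  The torus T^d = R^d/Z^d is modelled as the subgroup of complex^'d of vectors with
  all coordinates of modulus one (group law = componentwise multiplication, topology =
  subspace topology); the projection exp sends x to the vector of cis(2 pi x_j).\<close>

definition int_span :: "'a::real_vector set \<Rightarrow> 'a set" where
  "int_span S = {v. \<exists>F c. finite F \<and> F \<subseteq> S \<and> v = (\<Sum>u\<in>F. of_int (c u) *\<^sub>R u)}"

definition quasilattice :: "'a::euclidean_space set \<Rightarrow> bool" where
  "quasilattice Q \<longleftrightarrow> (\<exists>S. finite S \<and> span S = UNIV \<and> Q = int_span S)"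

definition torus :: "(complex^'d) set" where
  "torus = {t. \<forall>j. cmod (t $ j) = 1}"

definition texp :: "real^'d \<Rightarrow> complex^'d" where
  "texp x = (\<chi> j. cis (2 * pi * x $ j))"

definition piX :: "('d::finite \<Rightarrow> 'a::real_vector) \<Rightarrow> real^'d \<Rightarrow> 'a" where
  "piX X x = (\<Sum>j\<in>UNIV. x $ j *\<^sub>R X j)"

text \<open>N = kernel of the map T^d \<rightarrow> d/Q induced by piX, i.e. exp(piX^{-1}(Q)).\<close>
definition kerN :: "('d::finite \<Rightarrow> 'a::real_vector) \<Rightarrow> 'a set \<Rightarrow> (complex^'d) set" where
  "kerN X Q = {t. \<exists>x. t = texp x \<and> piX X x \<in> Q}"

definition subtorus :: "'d::finite set \<Rightarrow> (complex^'d) set" where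
  "subtorus J = texp ` {x. \<forall>j. j \<notin> J \<longrightarrow> x $ j = 0}"

definition GammaI :: "('d::finite \<Rightarrow> 'a::real_vector) \<Rightarrow> 'a set \<Rightarrow> 'd set \<Rightarrow> (complex^'d) set" where
  "GammaI X Q I = kerN X Q \<inter> subtorus I"

definition polyDelta :: "('d::finite \<Rightarrow> 'a::euclidean_space) \<Rightarrow> ('d \<Rightarrow> real) \<Rightarrow> 'a set" where
  "polyDelta X lam = {\<mu>. \<forall>j. \<mu> \<bullet> X j \<ge> lam j}"

definition activeI :: "('d::finite \<Rightarrow> 'a::euclidean_space) \<Rightarrow> ('d \<Rightarrow> real) \<Rightarrow> 'a \<Rightarrow> 'd set" where
  "activeI X lam \<mu> = {j. \<mu> \<bullet> X j = lam j}"

definition basis_family :: "('d \<Rightarrow> 'a::euclidean_space) \<Rightarrow> 'd set \<Rightarrow> bool" where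
  "basis_family X I \<longleftrightarrow> inj_on X I \<and> independent (X ` I) \<and> span (X ` I) = UNIV"

definition calI :: "('d::finite \<Rightarrow> 'a::euclidean_space) \<Rightarrow> ('d \<Rightarrow> real) \<Rightarrow> 'd set set" where
  "calI X lam = {I. basis_family X I \<and>
      (\<exists>\<mu>. \<mu> extreme_point_of polyDelta X lam \<and> I \<subseteq> activeI X lam \<mu>)}"

end

theory Submission
  imports Defs
begin

lemma rep_linear:
  fixes B :: "'a::euclidean_space set"
  assumes "independent B" "span B = UNIV"
  shows "linear (\<lambda>v. representation B v b)"
  using assms by (auto intro!: linearI simp: representation_add representation_scale)

lemma rep_sum:
  fixes B :: "'a::euclidean_space set"
  assumes "independent B" "span B = UNIV"
  shows "(\<Sum>u\<in>B. representation B v u *\<^sub>R u) = v"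
  using assms by (intro sum_representation_eq) (auto simp: independent_imp_finite)

lemma int_span_finite:
  assumes "finite S"
  shows "int_span S = {v. \<exists>c. v = (\<Sum>u\<in>S. of_int (c u) *\<^sub>R u)}"
proof (intro set_eqI iffI)
  fix v assume "v \<in> int_span S"
  then obtain F c where F: "finite F" "F \<subseteq> S" "v = (\<Sum>u\<in>F. of_int (c u) *\<^sub>R u)"
    unfolding int_span_def by auto
  let ?c = "\<lambda>u. if u \<in> F then c u else 0"
  have "(\<Sum>u\<in>S. of_int (?c u) *\<^sub>R u) = (\<Sum>u\<in>F. of_int (?c u) *\<^sub>R u)"
    using F assms by (intro sum.mono_neutral_right) auto
  also have "\<dots> = v" using F by simp
  finally show "v \<in> {v. \<exists>c. v = (\<Sum>u\<in>S. of_int (c u) *\<^sub>R u)}" by (auto intro!: exI[of _ ?c])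
next
  fix v assume "v \<in> {v. \<exists>c. v = (\<Sum>u\<in>S. of_int (c u) *\<^sub>R u)}"
  then show "v \<in> int_span S" unfolding int_span_def using assms by blast
qed

lemma texp_add: "texp (a + b) = texp a * texp b"
  by (simp add: texp_def vec_eq_iff cis_mult distrib_left)

lemma piX_linear: "linear (piX X)"
  by (auto intro!: linearI simp: piX_def sum.distrib scaleR_add_left scaleR_sum_right)

lemma piX_diff: "piX X (a - b) = piX X a - piX X b"
  using linear_diff[OF piX_linear] .

lemma texp_cont: "continuous_on UNIV texp"
  unfolding texp_def by (intro continuous_on_vec_lambda continuous_intros)

lemma texp_frac: "texp (\<chi> j. frac (x $ j)) = texp x"
proof -
  have "texp x = texp ((\<chi> j. frac (x $ j)) + (\<chi> j. of_int (floor (x $ j))))"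
    by (rule arg_cong[where f=texp]) (simp add: vec_eq_iff frac_def)
  also have "\<dots> = texp (\<chi> j. frac (x $ j))"
    unfolding texp_add by (simp add: texp_def vec_eq_iff)
  finally show ?thesis by simp
qed

definition QQ :: "'a::real_vector set \<Rightarrow> 'a set" where "QQ S = {v. \<exists>c. v = (\<Sum>u\<in>S. of_int (c u) *\<^sub>R u)}"
lemma Qzero: "0 \<in> QQ S" unfolding QQ_def by (rule CollectI, rule exI[of _ "\<lambda>_. 0"]) simp
lemma Qadd: "a \<in> QQ S \<Longrightarrow> b \<in> QQ S \<Longrightarrow> a + b \<in> QQ S"
proof -
  assume "a \<in> QQ S" "b \<in> QQ S"
  then obtain ca cb where "a = (\<Sum>u\<in>S. of_int (ca u) *\<^sub>R u)" "b = (\<Sum>u\<in>S. of_int (cb u) *\<^sub>R u)"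
    unfolding QQ_def by auto
  then show ?thesis unfolding QQ_def
    by (auto simp: sum.distrib scaleR_add_left intro!: exI[of _ "\<lambda>u. ca u + cb u"])
qed
lemma Qdiff0: "a \<in> QQ S \<Longrightarrow> b \<in> QQ S \<Longrightarrow> a - b \<in> QQ S"
proof -
  assume "a \<in> QQ S" "b \<in> QQ S"
  then obtain ca cb where "a = (\<Sum>u\<in>S. of_int (ca u) *\<^sub>R u)" "b = (\<Sum>u\<in>S. of_int (cb u) *\<^sub>R u)"
    unfolding QQ_def by auto
  then show ?thesis unfolding QQ_def
    by (auto simp: sum_subtractf scaleR_diff_left intro!: exI[of _ "\<lambda>u. ca u - cb u"])
qed
lemma Qscale: "a \<in> QQ S \<Longrightarrow> of_int n *\<^sub>R a \<in> QQ S"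
proof -
  assume "a \<in> QQ S"
  then obtain ca where "a = (\<Sum>u\<in>S. of_int (ca u) *\<^sub>R u)"
    unfolding QQ_def by auto
  then show ?thesis unfolding QQ_def
    by (auto simp: scaleR_sum_right scaleR_scaleR intro!: exI[of _ "\<lambda>u. n * ca u"])
qed
lemma Qsum: "finite A \<Longrightarrow> (\<And>i. i \<in> A \<Longrightarrow> f i \<in> QQ S) \<Longrightarrow> sum f A \<in> QQ S"
  by (induction A rule: finite_induct) (auto intro: Qzero Qadd)
theorem mainTheorem2:
  fixes X :: "'d::finite \<Rightarrow> 'a::euclidean_space"
    and lam :: "'d \<Rightarrow> real"
    and Q :: "'a set"
    and I :: "'d set"
    and c :: "nat \<Rightarrow> complex^'d"
  assumes poly: "polytope (polyDelta X lam)"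
    and fulldim: "aff_dim (polyDelta X lam) = int DIM('a)"
    and facets: "\<And>j. {\<mu>\<in>polyDelta X lam. \<mu> \<bullet> X j = lam j} facet_of polyDelta X lam"
    and distinct_facets: "inj (\<lambda>j. {\<mu>\<in>polyDelta X lam. \<mu> \<bullet> X j = lam j})"
    and all_facets: "\<And>F. F facet_of polyDelta X lam \<Longrightarrow>
                       \<exists>j. F = {\<mu>\<in>polyDelta X lam. \<mu> \<bullet> X j = lam j}"
    and qlat: "quasilattice Q"
    and XQ: "\<And>j. X j \<in> Q"
    and I: "I \<in> calI X lam"
    and c: "\<And>m. c m \<in> kerN X Q"
  shows "\<exists>r \<gamma> b b0. strict_mono r \<and>
           (\<forall>k. \<gamma> k \<in> GammaI X Q I \<and> b k \<in> kerN X Q \<and> c (r k) = \<gamma> k * b k) \<and>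
           b0 \<in> kerN X Q \<and> b \<longlonglongrightarrow> b0"
proof -
  obtain S where S: "finite S" "Q = int_span S" using qlat unfolding quasilattice_def by auto
  have QQ: "Q = QQ S" using S int_span_finite unfolding QQ_def by auto
  have Q0: "0 \<in> Q" using Qzero QQ by simp
  have Qdiff: "a \<in> Q \<Longrightarrow> b \<in> Q \<Longrightarrow> a - b \<in> Q" for a b using Qdiff0 QQ by simp
  have Qint: "(\<Sum>j\<in>UNIV. of_int (n j) *\<^sub>R X j) \<in> Q" for n :: "'d \<Rightarrow> int"
    unfolding QQ using XQ QQ by (intro Qsum Qscale) auto
  have "\<forall>m. \<exists>x. c m = texp x \<and> piX X x \<in> Q" using c unfolding kerN_def by auto
  then obtain x where x: "\<And>m. c m = texp (x m)" "\<And>m. piX X (x m) \<in> Q" by metis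
  define x' where "x' m = (\<chi> j. frac (x m $ j))" for m
  have cx': "c m = texp (x' m)" for m using x texp_frac unfolding x'_def by metis
  have px': "piX X (x' m) \<in> Q" for m
  proof -
    have "x' m = x m - (\<chi> j. of_int (floor (x m $ j)))" unfolding x'_def
      by (simp add: vec_eq_iff frac_def)
    then have "piX X (x' m) = piX X (x m) - (\<Sum>j\<in>UNIV. of_int (floor (x m $ j)) *\<^sub>R X j)"
      by (simp add: piX_diff) (simp add: piX_def)
    then show ?thesis using Qdiff x(2) Qint by simp
  qed
  define B where "B = X ` I"
  have bf: "basis_family X I" using I unfolding calI_def by auto
  then have injI: "inj_on X I" and indB: "independent B" and spB: "span B = UNIV"
    unfolding basis_family_def B_def by auto
  define R where "R y = (\<chi> i. if i \<in> I then 0 else y $ i)" for y :: "real^'d"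
  define g where "g j y = representation B (- piX X (R y)) (X j)" for j y
  define f where "f y = (\<chi> j. if j \<in> I then g j y else y $ j)" for y
  have linR: "linear R" unfolding R_def by (auto intro!: linearI simp: vec_eq_iff)
  have ling: "linear (g j)" for j
  proof -
    have "linear (\<lambda>y. - piX X (R y))"
      using linear_compose[OF linR piX_linear] by (intro linear_compose_neg) (simp add: o_def)
    from linear_compose[OF this rep_linear[OF indB spB]] show ?thesis
      unfolding g_def o_def .
  qed
  have contf: "continuous_on UNIV f"
    unfolding f_def
  proof (intro continuous_on_vec_lambda)
    fix j
    show "continuous_on UNIV (\<lambda>y. if j \<in> I then g j y else y $ j)"
    proof (cases "j \<in> I")
      case True
      then show ?thesis using linear_continuous_on[of "g j"] ling linear_conv_bounded_linear by auto
    next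
      case False
      then show ?thesis by (simp add: continuous_intros)
    qed
  qed
  have pf: "piX X (f y) = 0" for y
  proof -
    have "piX X (f y) = (\<Sum>j\<in>UNIV. (if j \<in> I then g j y *\<^sub>R X j else 0)) + piX X (R y)"
      unfolding piX_def f_def R_def by (simp add: sum.distrib[symmetric] if_distrib) (rule sum.cong, auto)
    also have "(\<Sum>j\<in>UNIV. (if j \<in> I then g j y *\<^sub>R X j else 0)) = (\<Sum>j\<in>I. g j y *\<^sub>R X j)"
      by (simp add: sum.If_cases)
    also have "\<dots> = (\<Sum>u\<in>B. representation B (- piX X (R y)) u *\<^sub>R u)"
      unfolding B_def g_def using sum.reindex[OF injI, of "\<lambda>u. representation (X ` I) (- piX X (R y)) u *\<^sub>R u"]
      by simp
    also have "\<dots> = - piX X (R y)" using rep_sum[OF indB spB] .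
    finally show ?thesis by simp
  qed
  have inbox: "x' m \<in> cbox 0 1" for m
    unfolding x'_def by (simp add: mem_box_cart frac_ge_0 less_imp_le[OF frac_lt_1])
  obtain l r where l: "l \<in> cbox 0 1" "strict_mono r" "(x' \<circ> r) \<longlonglongrightarrow> l"
    using compact_cbox[of "0::real^'d" 1] inbox unfolding compact_def by metis
  define b where "b k = texp (f (x' (r k)))" for k
  define \<gamma> where "\<gamma> k = texp (x' (r k) - f (x' (r k)))" for k
  have bk: "b k \<in> kerN X Q" for k unfolding b_def kerN_def using pf Q0 by auto
  have gk: "\<gamma> k \<in> GammaI X Q I" for k
    unfolding GammaI_def
  proof
    show "\<gamma> k \<in> kerN X Q" unfolding \<gamma>_def kerN_def using px' pf by (auto simp: piX_diff)
    show "\<gamma> k \<in> subtorus I" unfolding \<gamma>_def subtorus_def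
      by (rule imageI) (simp add: f_def)
  qed
  have ck: "c (r k) = \<gamma> k * b k" for k
    unfolding \<gamma>_def b_def texp_add[symmetric] cx' by simp
  have b0: "texp (f l) \<in> kerN X Q" unfolding kerN_def using pf Q0 by auto
  have "b \<longlonglongrightarrow> texp (f l)"
  proof -
    have "(\<lambda>k. (texp \<circ> f) ((x' \<circ> r) k)) \<longlonglongrightarrow> (texp \<circ> f) l"
      using continuous_on_tendsto_compose[OF continuous_on_compose[OF contf continuous_on_subset[OF texp_cont]] l(3)]
      by auto
    then show ?thesis unfolding b_def by (simp add: o_def)
  qed
  then show ?thesis using l(2) gk bk ck b0 by blast
qed

end
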